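(* Let $P=\begin{pmatrix}\alpha&\beta\\\gamma&\delta\end{pmatrix}\in\mathbb{N}_0^{2\times2}$ be an incidence matrix such that (i) there exists a pair $(i,j)\in\{(\alpha,\beta),(\alpha,\gamma),(\delta,\beta),(\delta,\gamma)\}$ with $\gcd(i,j)\neq1$, and (ii) a row (respectively column) of $P$ dominates the other row (respectively column) of $P$. Then $P$ does not exclusively represent irreducible morphisms.
   Context: Let $\Sigma=\{a,b\}$ with $a_1=a,a_2=b$. A morphism $\varphi:\Sigma^+\to\Sigma^+$ (non-empty images) is Parikh-positive if both letters occur in $\varphi(a)\varphi(b)$. Its incidence matrix is $P(\varphi)=(m_{i,j})$ with $m_{i,j}=|\varphi(a_j)|_{a_i}$; throughout, incidence matrices considered have no zero rows or columns. An automorphism is an injective morphism mapping each letter to a single letter; a morphism is reducible if it equals $\psi_2\circ\psi_1$ with neither $\psi_1,\psi_2$ an automorphism, irreducible otherwise. An incidence matrix $P$ exclusively represents irreducible morphisms if every Parikh-positive morphism $\varphi$ with $P(\varphi)=P$ is irreducible. A row (or column) $(x_1,x_2)$ dominates a row (or column) $(y_1,y_2)$ if $x_1\geq y_1$ and $x_2\geq y_2$. *)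

theory Defs
  imports Main
begin

datatype letter = A | B

text \<open>A morphism Sigma^+ -> Sigma^+ is determined by the (non-empty) images of the letters.\<close>
definition is_morphism :: "(letter \<Rightarrow> letter list) \<Rightarrow> bool" where
  "is_morphism f \<longleftrightarrow> (\<forall>x. f x \<noteq> [])"

definition ext :: "(letter \<Rightarrow> letter list) \<Rightarrow> letter list \<Rightarrow> letter list" where
  "ext f w = concat (map f w)"

definition parikh_positive :: "(letter \<Rightarrow> letter list) \<Rightarrow> bool" where
  "parikh_positive f \<longleftrightarrow> (\<forall>x. x \<in> set (f A @ f B))"

definition incidence :: "(letter \<Rightarrow> letter list) \<Rightarrow> letter \<Rightarrow> letter \<Rightarrow> nat" where
  "incidence f i j = count_list (f j) i"

definition has_incidence :: "(letter \<Rightarrow> letter list) \<Rightarrow> nat \<Rightarrow> nat \<Rightarrow> nat \<Rightarrow> nat \<Rightarrow> bool" where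
  "has_incidence f \<alpha> \<beta> \<gamma> \<delta> \<longleftrightarrow>
     incidence f A A = \<alpha> \<and> incidence f A B = \<beta> \<and>
     incidence f B A = \<gamma> \<and> incidence f B B = \<delta>"

definition automorphism :: "(letter \<Rightarrow> letter list) \<Rightarrow> bool" where
  "automorphism f \<longleftrightarrow> (\<exists>g. inj g \<and> (\<forall>x. f x = [g x]))"

definition reducible :: "(letter \<Rightarrow> letter list) \<Rightarrow> bool" where
  "reducible f \<longleftrightarrow> (\<exists>\<psi>1 \<psi>2. is_morphism \<psi>1 \<and> is_morphism \<psi>2 \<and>
      \<not> automorphism \<psi>1 \<and> \<not> automorphism \<psi>2 \<and>
      (\<forall>w. w \<noteq> [] \<longrightarrow> ext f w = ext \<psi>2 (ext \<psi>1 w)))"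

definition irreducible :: "(letter \<Rightarrow> letter list) \<Rightarrow> bool" where
  "irreducible f \<longleftrightarrow> \<not> reducible f"

definition excl_irreducible :: "nat \<Rightarrow> nat \<Rightarrow> nat \<Rightarrow> nat \<Rightarrow> bool" where
  "excl_irreducible \<alpha> \<beta> \<gamma> \<delta> \<longleftrightarrow>
     (\<forall>f. is_morphism f \<and> parikh_positive f \<and> has_incidence f \<alpha> \<beta> \<gamma> \<delta> \<longrightarrow> irreducible f)"

definition dominates :: "nat \<times> nat \<Rightarrow> nat \<times> nat \<Rightarrow> bool" where
  "dominates x y \<longleftrightarrow> fst x \<ge> fst y \<and> snd x \<ge> snd y"

end

theory Submission
  imports Defs
begin

definition W :: "nat \<Rightarrow> nat \<Rightarrow> letter list" where
  "W p r = replicate p A @ replicate r B"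

definition mk :: "letter list \<Rightarrow> letter list \<Rightarrow> letter \<Rightarrow> letter list" where
  "mk u v x = (case x of A \<Rightarrow> u | B \<Rightarrow> v)"

lemma cl_rep: "count_list (replicate n x) y = (if x = y then n else 0)"
  by (induction n) auto

lemma cl_W: "count_list (W p r) A = p" "count_list (W p r) B = r"
  by (auto simp: W_def cl_rep)

lemma cl_concat_rep: "count_list (concat (replicate p u)) i = p * count_list u i"
  by (induction p) auto

lemma cl_ext_W: "count_list (ext \<psi> (W p r)) i = p * count_list (\<psi> A) i + r * count_list (\<psi> B) i"
  by (simp add: ext_def W_def cl_concat_rep)

lemma W_ne: "W p r \<noteq> [] \<longleftrightarrow> p + r > 0"
  by (auto simp: W_def)

lemma mk_morph: "p + r > 0 \<Longrightarrow> q + s > 0 \<Longrightarrow> is_morphism (mk (W p r) (W q s))"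
  unfolding is_morphism_def mk_def using W_ne by (auto split: letter.splits)

lemma W_single: "W p r = [x] \<Longrightarrow> (p = 1 \<and> r = 0 \<and> x = A) \<or> (p = 0 \<and> r = 1 \<and> x = B)"
  by (cases p; cases r; auto simp: W_def)

lemma mk_auto:
  assumes "automorphism (mk (W p r) (W q s))"
  shows "(p=1 \<and> r=0 \<and> q=0 \<and> s=1) \<or> (p=0 \<and> r=1 \<and> q=1 \<and> s=0)"
proof -
  obtain g where g: "inj g" "\<forall>x. mk (W p r) (W q s) x = [g x]"
    using assms unfolding automorphism_def by blast
  have 1: "W p r = [g A]" using spec[OF g(2), of A] by (simp add: mk_def)
  have 2: "W q s = [g B]" using spec[OF g(2), of B] by (simp add: mk_def)
  have "g A \<noteq> g B" using g(1) by (simp add: inj_eq)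
  then show ?thesis using W_single[OF 1] W_single[OF 2] by fastforce
qed

lemma key:
  assumes "is_morphism \<psi>1" "is_morphism \<psi>2" "\<not> automorphism \<psi>1" "\<not> automorphism \<psi>2"
    and "has_incidence (\<lambda>x. ext \<psi>2 (\<psi>1 x)) \<alpha> \<beta> \<gamma> \<delta>"
    and "(\<alpha>, \<beta>) \<noteq> (0, 0)" "(\<gamma>, \<delta>) \<noteq> (0, 0)"
    and "\<forall>x. \<psi>2 x \<noteq> []"
  shows "\<not> excl_irreducible \<alpha> \<beta> \<gamma> \<delta>"
proof -
  define f where "f = (\<lambda>x. ext \<psi>2 (\<psi>1 x))"
  have m: "is_morphism f" unfolding is_morphism_def
  proof
    fix x
    obtain y ys where "\<psi>1 x = y # ys" using assms(1) unfolding is_morphism_def by (meson neq_Nil_conv)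
    then show "f x \<noteq> []" using assms(2) unfolding is_morphism_def f_def ext_def by simp
  qed
  have hi: "has_incidence f \<alpha> \<beta> \<gamma> \<delta>" using assms(5) f_def by simp
  have pp: "parikh_positive f"
    unfolding parikh_positive_def
  proof
    fix x show "x \<in> set (f A @ f B)"
    proof (cases x)
      case A
      then have "count_list (f A) A > 0 \<or> count_list (f B) A > 0"
        using hi assms(6) unfolding has_incidence_def incidence_def by auto
      then show ?thesis using A count_notin by fastforce
    next
      case B
      then have "count_list (f A) B > 0 \<or> count_list (f B) B > 0"
        using hi assms(7) unfolding has_incidence_def incidence_def by auto
      then show ?thesis using B count_notin by fastforce
    qed
  qed
  have "reducible f" unfolding reducible_def
  proof (rule exI[of _ \<psi>1], rule exI[of _ \<psi>2], intro conjI allI impI)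
    fix w :: "letter list"
    show "ext f w = ext \<psi>2 (ext \<psi>1 w)" unfolding f_def ext_def by (induction w) auto
  qed (use assms(1-4) in auto)
  then show ?thesis using m hi pp unfolding excl_irreducible_def irreducible_def by blast
qed

theorem proposition24:
  fixes \<alpha> \<beta> \<gamma> \<delta> :: nat
  assumes no_zero_rows: "(\<alpha>, \<beta>) \<noteq> (0, 0)" "(\<gamma>, \<delta>) \<noteq> (0, 0)"
    and no_zero_cols: "(\<alpha>, \<gamma>) \<noteq> (0, 0)" "(\<beta>, \<delta>) \<noteq> (0, 0)"
    and gcd_cond: "\<exists>(i, j) \<in> {(\<alpha>, \<beta>), (\<alpha>, \<gamma>), (\<delta>, \<beta>), (\<delta>, \<gamma>)}. gcd i j \<noteq> 1"
    and dom_cond: "dominates (\<alpha>, \<beta>) (\<gamma>, \<delta>) \<or> dominates (\<gamma>, \<delta>) (\<alpha>, \<beta>) \<or>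
                   dominates (\<alpha>, \<gamma>) (\<beta>, \<delta>) \<or> dominates (\<beta>, \<delta>) (\<alpha>, \<gamma>)"
  shows "\<not> excl_irreducible \<alpha> \<beta> \<gamma> \<delta>"
proof -
  have inc: "has_incidence (\<lambda>x. ext (mk (W a1 b1) (W a2 b2)) (mk (W p r) (W q s) x)) 
     (p*a1 + r*a2) (q*a1+s*a2) (p*b1+r*b2) (q*b1+s*b2)" for a1 b1 a2 b2 p r q s
    by (simp add: has_incidence_def incidence_def mk_def cl_ext_W cl_W)
  have ne: "\<forall>x. mk (W p r) (W q s) x \<noteq> []" if "p+r>0" "q+s>0" for p r q s
    using that W_ne by (auto simp: mk_def split: letter.splits)
  from gcd_cond consider "gcd \<alpha> \<beta> \<noteq> 1" | "gcd \<alpha> \<gamma> \<noteq> 1" | "gcd \<delta> \<beta> \<noteq> 1" | "gcd \<delta> \<gamma> \<noteq> 1"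
    by auto
  then show ?thesis
  proof cases
    case 1
    define d where "d = gcd \<alpha> \<beta>"
    have d2: "d \<ge> 2" unfolding d_def
      proof -
        have "gcd \<alpha> \<beta> \<noteq> 0" using no_zero_rows(1) by auto
        then show "gcd \<alpha> \<beta> \<ge> 2" using 1 by linarith
      qed
    have e1: "\<alpha> div d * d = \<alpha>" "\<beta> div d * d = \<beta>" unfolding d_def by simp_all
    have p1: "\<alpha> div d + \<gamma> > 0" "\<beta> div d + \<delta> > 0" using no_zero_cols e1
      by (metis add_is_0 mult_zero_left neq0_conv prod.inject)+
    have "\<not> excl_irreducible ((\<alpha> div d)*d + \<gamma>*0) ((\<beta> div d)*d+\<delta>*0) ((\<alpha> div d)*0+\<gamma>*1) ((\<beta> div d)*0+\<delta>*1)"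
    proof (rule key[OF mk_morph mk_morph _ _ inc _ _ ne])
      show "\<not> automorphism (mk (W (\<alpha> div d) \<gamma>) (W (\<beta> div d) \<delta>))"
        using mk_auto dom_cond e1 by (fastforce simp: dominates_def)
      show "\<not> automorphism (mk (W d 0) (W 0 1))" using mk_auto d2 by fastforce
    qed (use p1 d2 e1 no_zero_rows in auto)
    then show ?thesis using e1 by simp
  next
    case 2
    define d where "d = gcd \<alpha> \<gamma>"
    have d2: "d \<ge> 2" unfolding d_def
      proof -
        have "gcd \<alpha> \<gamma> \<noteq> 0" using no_zero_cols(1) by auto
        then show "gcd \<alpha> \<gamma> \<ge> 2" using 2 by linarith
      qed
    have e1: "\<alpha> div d * d = \<alpha>" "\<gamma> div d * d = \<gamma>" unfolding d_def by simp_all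
    have p1: "\<alpha> div d + \<gamma> div d > 0" using no_zero_cols e1
      by (metis add_is_0 mult_zero_left neq0_conv prod.inject)+
    have p2: "\<beta> + \<delta> > 0" using no_zero_cols by auto
    have "\<not> excl_irreducible (d*(\<alpha> div d) + 0*\<beta>) (0*(\<alpha> div d)+1*\<beta>) (d*(\<gamma> div d)+0*\<delta>) (0*(\<gamma> div d)+1*\<delta>)"
    proof (rule key[OF mk_morph mk_morph _ _ inc _ _ ne])
      show "\<not> automorphism (mk (W (\<alpha> div d) (\<gamma> div d)) (W \<beta> \<delta>))"
        using mk_auto dom_cond e1 by (fastforce simp: dominates_def)
      show "\<not> automorphism (mk (W d 0) (W 0 1))" using mk_auto d2 by fastforce
    qed (use p1 p2 d2 e1 no_zero_rows in \<open>auto simp: mult.commute\<close>)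
    then show ?thesis using e1 by (simp add: mult.commute)
  next
    case 3
    define d where "d = gcd \<delta> \<beta>"
    have d2: "d \<ge> 2" unfolding d_def
      proof -
        have "gcd \<delta> \<beta> \<noteq> 0" using no_zero_cols(2) by auto
        then show "gcd \<delta> \<beta> \<ge> 2" using 3 by linarith
      qed
    have e1: "\<delta> div d * d = \<delta>" "\<beta> div d * d = \<beta>" unfolding d_def by simp_all
    have p1: "\<beta> div d + \<delta> div d > 0" using no_zero_cols e1
      by (metis add_is_0 mult_zero_left neq0_conv prod.inject)+
    have p2: "\<alpha> + \<gamma> > 0" using no_zero_cols by auto
    have "\<not> excl_irreducible (1*\<alpha> + 0*(\<beta> div d)) (0*\<alpha>+d*(\<beta> div d)) (1*\<gamma>+0*(\<delta> div d)) (0*\<gamma>+d*(\<delta> div d))"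
    proof (rule key[OF mk_morph mk_morph _ _ inc _ _ ne])
      show "\<not> automorphism (mk (W \<alpha> \<gamma>) (W (\<beta> div d) (\<delta> div d)))"
        using mk_auto dom_cond e1 by (fastforce simp: dominates_def)
      show "\<not> automorphism (mk (W 1 0) (W 0 d))" using mk_auto d2 by fastforce
    qed (use p1 p2 d2 e1 no_zero_rows in \<open>auto simp: mult.commute\<close>)
    then show ?thesis using e1 by (simp add: mult.commute)
  next
    case 4
    define d where "d = gcd \<delta> \<gamma>"
    have d2: "d \<ge> 2" unfolding d_def
      proof -
        have "gcd \<delta> \<gamma> \<noteq> 0" using no_zero_rows(2) by auto
        then show "gcd \<delta> \<gamma> \<ge> 2" using 4 by linarith
      qed
    have e1: "\<delta> div d * d = \<delta>" "\<gamma> div d * d = \<gamma>" unfolding d_def by simp_all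
    have p1: "\<alpha> + \<gamma> div d > 0" "\<beta> + \<delta> div d > 0" using no_zero_cols e1
      by (metis add_is_0 mult_zero_left neq0_conv prod.inject)+
    have "\<not> excl_irreducible (\<alpha>*1 + (\<gamma> div d)*0) (\<beta>*1+(\<delta> div d)*0) (\<alpha>*0+(\<gamma> div d)*d) (\<beta>*0+(\<delta> div d)*d)"
    proof (rule key[OF mk_morph mk_morph _ _ inc _ _ ne])
      show "\<not> automorphism (mk (W \<alpha> (\<gamma> div d)) (W \<beta> (\<delta> div d)))"
        using mk_auto dom_cond e1 by (fastforce simp: dominates_def)
      show "\<not> automorphism (mk (W 1 0) (W 0 d))" using mk_auto d2 by fastforce
    qed (use p1 d2 e1 no_zero_rows in auto)
    then show ?thesis using e1 by simp
  qed
qed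

end
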